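(* Let $(P,\mathcal{B})$ be a nontrivial pairwise balanced design with $n\ge 3$ points. Then \[\sum_{B\in\mathcal{B}}|B|\ \ge\ 3n-3,\] and equality holds if and only if $(P,\mathcal{B})$ is a near-pencil.
   Context: A pairwise balanced design (PBD) is a pair $(P,\mathcal{B})$ where $P$ is a finite set of points and $\mathcal{B}$ is a family of subsets of $P$ (blocks), each of size at least $2$, such that every two distinct points of $P$ lie in exactly one block. It is nontrivial if $P\notin\mathcal{B}$. A PBD on $n$ points is a near-pencil if it has one block of size $n-1$ and all other blocks have size $2$. *)

theory Defs
  imports Main
begin

definition pbd :: "'a set \<Rightarrow> 'a set set \<Rightarrow> bool" where
  "pbd P B \<longleftrightarrow> finite P \<and> (\<forall>b\<in>B. b \<subseteq> P \<and> card b \<ge> 2) \<and>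
     (\<forall>x\<in>P. \<forall>y\<in>P. x \<noteq> y \<longrightarrow> (\<exists>!b. b \<in> B \<and> x \<in> b \<and> y \<in> b))"

definition nontrivial_pbd :: "'a set \<Rightarrow> 'a set set \<Rightarrow> bool" where
  "nontrivial_pbd P B \<longleftrightarrow> pbd P B \<and> P \<notin> B"

definition near_pencil :: "'a set \<Rightarrow> 'a set set \<Rightarrow> bool" where
  "near_pencil P B \<longleftrightarrow> pbd P B \<and>
     (\<exists>b0\<in>B. card b0 = card P - 1 \<and> (\<forall>b\<in>B. b \<noteq> b0 \<longrightarrow> card b = 2))"

end

theory Submission
  imports Defs
begin

lemma pbdD:
  assumes "pbd P B"
  shows "finite P" "\<And>b. b \<in> B \<Longrightarrow> b \<subseteq> P" "\<And>b. b \<in> B \<Longrightarrow> 2 \<le> card b"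
    "\<And>x y. x \<in> P \<Longrightarrow> y \<in> P \<Longrightarrow> x \<noteq> y \<Longrightarrow> \<exists>!b. b \<in> B \<and> x \<in> b \<and> y \<in> b"
proof -
  have h: "finite P \<and> (\<forall>b\<in>B. b \<subseteq> P \<and> card b \<ge> 2) \<and>
     (\<forall>x\<in>P. \<forall>y\<in>P. x \<noteq> y \<longrightarrow> (\<exists>!b. b \<in> B \<and> x \<in> b \<and> y \<in> b))"
    using assms unfolding pbd_def .
  show "finite P" using h by (rule conjunct1)
  show "\<And>b. b \<in> B \<Longrightarrow> b \<subseteq> P" using h by simp
  show "\<And>b. b \<in> B \<Longrightarrow> 2 \<le> card b" using h by simp
  show "\<And>x y. x \<in> P \<Longrightarrow> y \<in> P \<Longrightarrow> x \<noteq> y \<Longrightarrow> \<exists>!b. b \<in> B \<and> x \<in> b \<and> y \<in> b"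
  proof -
    fix x y assume "x \<in> P" "y \<in> P" "x \<noteq> y"
    have "\<forall>y\<in>P. x \<noteq> y \<longrightarrow> (\<exists>!b. b \<in> B \<and> x \<in> b \<and> y \<in> b)"
      using bspec[OF conjunct2[OF conjunct2[OF h]] \<open>x \<in> P\<close>] .
    from mp[OF bspec[OF this \<open>y \<in> P\<close>] \<open>x \<noteq> y\<close>]
    show "\<exists>!b. b \<in> B \<and> x \<in> b \<and> y \<in> b" .
  qed
qed

lemma pbd_fin: "pbd P B \<Longrightarrow> finite B"
proof -
  assume a: "pbd P B"
  then have "B \<subseteq> Pow P" using pbdD(2) by blast
  then show "finite B" by (rule finite_subset) (simp add: pbdD(1)[OF a])
qed

lemma pbd_uniq:
  assumes "pbd P B" "b\<in>B" "c\<in>B" "x\<in>b" "y\<in>b" "x\<in>c" "y\<in>c" "x\<noteq>y"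
  shows "b = c"
proof -
  have "x \<in> P" "y \<in> P" using pbdD(2)[OF assms(1) assms(2)] assms(4,5) by blast+
  then have u: "\<exists>!b. b \<in> B \<and> x \<in> b \<and> y \<in> b" using pbdD(4)[OF assms(1)] assms(8) by simp
  from u obtain w where w: "\<forall>z. z \<in> B \<and> x \<in> z \<and> y \<in> z \<longrightarrow> z = w"
    by (elim ex1E) blast
  then have "b = w" "c = w" using assms(2-7) by blast+
  then show ?thesis by simp
qed

lemma pbd_ex:
  assumes "pbd P B" "x\<in>P" "y\<in>P" "x\<noteq>y"
  shows "\<exists>b\<in>B. x\<in>b \<and> y\<in>b"
proof -
  have "\<exists>!b. b \<in> B \<and> x \<in> b \<and> y \<in> b" using pbdD(4)[OF assms] .
  then show ?thesis by (metis ex1_implies_ex)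
qed

lemma double_count:
  assumes "pbd P B"
  shows "(\<Sum>b\<in>B. card b) = (\<Sum>x\<in>P. card {b\<in>B. x\<in>b})"
proof -
  have fP: "finite P" using pbdD(1)[OF assms] .
  have fB: "finite B" using pbd_fin[OF assms] .
  have "(\<Sum>b\<in>B. card b) = (\<Sum>b\<in>B. \<Sum>x\<in>P. if x\<in>b then 1 else 0)"
  proof (rule sum.cong[OF refl])
    fix b assume "b \<in> B"
    then have "b \<subseteq> P" using pbdD(2)[OF assms] by blast
    then have "(\<Sum>x\<in>P. if x\<in>b then 1 else (0::nat)) = card (P \<inter> b)"
      using fP by (simp add: sum.inter_restrict[symmetric])
    also have "\<dots> = card b" using \<open>b \<subseteq> P\<close> by (simp add: Int_absorb1)
    finally show "card b = (\<Sum>x\<in>P. if x\<in>b then 1 else 0)" by simp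
  qed
  also have "\<dots> = (\<Sum>x\<in>P. \<Sum>b\<in>B. if x\<in>b then 1 else 0)" by (rule sum.swap)
  also have "\<dots> = (\<Sum>x\<in>P. card {b\<in>B. x\<in>b})"
  proof (rule sum.cong[OF refl])
    fix x assume "x\<in>P"
    show "(\<Sum>b\<in>B. if x\<in>b then 1 else 0) = card {b\<in>B. x\<in>b}"
      using sum.inter_filter[OF fB, of "\<lambda>_. 1::nat" "\<lambda>b. x\<in>b"] by simp
  qed
  finally show ?thesis .
qed

lemma r_ge_card:
  assumes "pbd P B" "b\<in>B" "x\<in>P" "x\<notin>b"
  shows "card b \<le> card {c\<in>B. x\<in>c}"
proof -
  define f where "f y = (SOME c. c\<in>B \<and> x\<in>c \<and> y\<in>c)" for y
  have bP: "b \<subseteq> P" using pbdD(2)[OF assms(1) assms(2)] .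
  have f: "f y \<in> B \<and> x \<in> f y \<and> y \<in> f y" if "y \<in> b" for y
  proof -
    have "\<exists>c\<in>B. x\<in>c \<and> y\<in>c" using pbd_ex[OF assms(1) assms(3)] that bP assms(4) by blast
    then show ?thesis unfolding f_def by (metis (mono_tags, lifting) someI_ex)
  qed
  have "inj_on f b"
  proof (rule inj_onI)
    fix y y' assume yy: "y\<in>b" "y'\<in>b" "f y = f y'"
    show "y = y'"
    proof (rule ccontr)
      assume "y \<noteq> y'"
      then have "f y = b" using pbd_uniq[OF assms(1), of "f y" b y y'] f[OF yy(1)] f[OF yy(2)] yy assms(2) by simp
      then show False using f[OF yy(1)] assms(4) by simp
    qed
  qed
  moreover have "f ` b \<subseteq> {c\<in>B. x\<in>c}" using f by blast
  moreover have "finite {c\<in>B. x\<in>c}" using pbd_fin[OF assms(1)] by simp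
  ultimately show ?thesis by (metis card_inj_on_le)
qed

lemma r_ge2:
  assumes "nontrivial_pbd P B" "x\<in>P" "card P \<ge> 2"
  shows "2 \<le> card {c\<in>B. x\<in>c}"
proof -
  have pb: "pbd P B" and PB: "P \<notin> B" using assms(1) unfolding nontrivial_pbd_def by simp_all
  have fP: "finite P" using pbdD(1)[OF pb] .
  obtain y where y: "y\<in>P" "y\<noteq>x"
  proof -
    have "card P \<noteq> card {x}" using assms(3) by simp
    then have "P - {x} \<noteq> {}" using assms(2) by (metis Diff_eq_empty_iff insert_Diff_single insert_absorb)
    then show ?thesis using that by blast
  qed
  obtain c where c: "c\<in>B" "x\<in>c" "y\<in>c" using pbd_ex[OF pb assms(2) y(1)] y(2) by metis
  have "c \<subseteq> P" using pbdD(2)[OF pb c(1)] .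
  moreover have "c \<noteq> P" using PB c(1) by metis
  ultimately have "\<not> P \<subseteq> c" by (metis subset_antisym)
  then obtain z where z: "z\<in>P" "z\<notin>c" by (metis subsetI)
  have "z \<noteq> x" using z c by blast
  obtain d where d: "d\<in>B" "x\<in>d" "z\<in>d" using pbd_ex[OF pb assms(2) z(1)] \<open>z\<noteq>x\<close> by metis
  have "c \<noteq> d" using z d by blast
  have "{c,d} \<subseteq> {c\<in>B. x\<in>c}" using c d by blast
  moreover have "finite {c\<in>B. x\<in>c}" using pbd_fin[OF pb] by simp
  ultimately have "card {c,d} \<le> card {c\<in>B. x\<in>c}" by (rule card_mono[rotated])
  then show ?thesis using \<open>c\<noteq>d\<close> by simp
qed

theorem mainTheorem1:
  fixes P :: "'a set" and B :: "'a set set"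
  assumes "nontrivial_pbd P B" and "card P \<ge> 3"
  shows "(\<Sum>b\<in>B. card b) \<ge> 3 * card P - 3
         \<and> ((\<Sum>b\<in>B. card b) = 3 * card P - 3 \<longleftrightarrow> near_pencil P B)"
proof -
  have pb: "pbd P B" and PB: "P \<notin> B" using assms(1) unfolding nontrivial_pbd_def by simp_all
  have fP: "finite P" using pbdD(1)[OF pb] .
  have fB: "finite B" using pbd_fin[OF pb] .
  have sub: "\<And>b. b \<in> B \<Longrightarrow> b \<subseteq> P" and c2: "\<And>b. b \<in> B \<Longrightarrow> 2 \<le> card b"
    using pbdD(2,3)[OF pb] by blast+
  have fb: "\<And>b. b \<in> B \<Longrightarrow> finite b" using sub fP finite_subset by blast
  define n where "n = card P"
  have n3: "n \<ge> 3" using assms(2) n_def by simp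
  define S where "S = (\<Sum>b\<in>B. card b)"
  have dc: "S = (\<Sum>x\<in>P. card {c\<in>B. x\<in>c})" unfolding S_def by (rule double_count[OF pb])
  have two: "\<exists>u v. u \<in> X \<and> v \<in> X \<and> u \<noteq> v" if X2: "2 \<le> card X" for X :: "'a set"
  proof -
    have "finite X" using X2 card.infinite by fastforce
    have "X \<noteq> {}" using X2 by auto
    then obtain u where u: "u \<in> X" by blast
    have "card (X - {u}) \<ge> 1" using X2 u \<open>finite X\<close> by simp
    then have "X - {u} \<noteq> {}" by (metis card.empty not_one_le_zero)
    then obtain v where "v \<in> X - {u}" by blast
    then show ?thesis using u by blast
  qed
  have main: "if (\<exists>b\<in>B. card b = n - 1) then S = 3 * n - 3 \<and> near_pencil P B
              else S \<ge> 3 * n - 2"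
  proof (cases "\<exists>b\<in>B. card b = n - 1")
    case True
    then obtain b1 where b1: "b1 \<in> B" "card b1 = n - 1" by blast
    have "card (P - b1) = 1" using card_Diff_subset[OF fb[OF b1(1)] sub[OF b1(1)]] b1(2) n_def n3
      by simp
    then obtain q where q: "P - b1 = {q}" by (auto simp: card_1_singleton_iff)
    have qP: "q \<in> P" "q \<notin> b1" using q by auto
    have qin: "q \<in> b" if bb: "b \<in> B" "b \<noteq> b1" for b
    proof (rule ccontr)
      assume "q \<notin> b"
      then have "b \<subseteq> b1" using sub[OF bb(1)] q by auto
      obtain u v where "u \<in> b" "v \<in> b" "u \<noteq> v" using two c2[OF bb(1)] by blast
      then have "b = b1" using pbd_uniq[OF pb bb(1) b1(1)] \<open>b \<subseteq> b1\<close> by blast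
      then show False using bb by simp
    qed
    have card2: "card b = 2" if bb: "b \<in> B" "b \<noteq> b1" for b
    proof -
      have "card (b \<inter> b1) \<le> Suc 0"
        using fb[OF bb(1)] pbd_uniq[OF pb bb(1) b1(1)] bb(2)
        by (subst card_le_Suc0_iff_eq) auto
      moreover have "b \<subseteq> insert q (b \<inter> b1)" using sub[OF bb(1)] q by blast
      hence "card b \<le> card (insert q (b \<inter> b1))" using fb[OF bb(1)] by (intro card_mono) auto
      moreover have "card (insert q (b \<inter> b1)) \<le> Suc (card (b \<inter> b1))"
        using fb[OF bb(1)] by (simp add: card_insert_if)
      ultimately show ?thesis using c2[OF bb(1)] by linarith
    qed
    have "card b1 = card P - 1 \<and> (\<forall>b\<in>B. b \<noteq> b1 \<longrightarrow> card b = 2)"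
      using b1(2) card2 n_def by simp
    then have np: "near_pencil P B" unfolding near_pencil_def using pb b1(1) by blast
    define g where "g x = (SOME c. c\<in>B \<and> q\<in>c \<and> x\<in>c)" for x
    have g: "g x \<in> B \<and> q \<in> g x \<and> x \<in> g x" if "x \<in> b1" for x
    proof -
      have "x \<in> P" "x \<noteq> q" using that sub[OF b1(1)] qP by auto
      then have "\<exists>c\<in>B. q\<in>c \<and> x\<in>c" using pbd_ex[OF pb qP(1)] by metis
      then show ?thesis unfolding g_def by (metis (mono_tags, lifting) someI_ex)
    qed
    have "bij_betw g b1 (B - {b1})"
    proof (rule bij_betw_imageI)
      show "inj_on g b1"
      proof (rule inj_onI)
        fix x x' assume xx: "x \<in> b1" "x' \<in> b1" "g x = g x'"
        show "x = x'"
        proof (rule ccontr)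
          assume "x \<noteq> x'"
          then have "g x = b1" using pbd_uniq[OF pb, of "g x" b1 x x'] g[OF xx(1)] g[OF xx(2)] xx b1(1)
            by simp
          then show False using g[OF xx(1)] qP by simp
        qed
      qed
      show "g ` b1 = B - {b1}"
      proof
        show "g ` b1 \<subseteq> B - {b1}" using g qP by fastforce
        show "B - {b1} \<subseteq> g ` b1"
        proof
          fix b assume b: "b \<in> B - {b1}"
          then have "q \<in> b" "card b = 2" using qin card2 by auto
          then have "card (b - {q}) = 1" by simp
          then obtain x where x: "b - {q} = {x}" by (auto simp: card_1_singleton_iff)
          then have "x \<in> b" "x \<noteq> q" by auto
          then have "x \<in> b1" using sub b q by blast
          have "g x = b" using pbd_uniq[OF pb, of "g x" b q x] g[OF \<open>x\<in>b1\<close>] b \<open>q\<in>b\<close> \<open>x\<in>b\<close> \<open>x\<noteq>q\<close>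
            by auto
          then show "b \<in> g ` b1" using \<open>x\<in>b1\<close> by blast
        qed
      qed
    qed
    then have cB: "card (B - {b1}) = n - 1" using bij_betw_same_card b1(2) by metis
    have "S = card b1 + (\<Sum>b\<in>B - {b1}. card b)" unfolding S_def
      using sum.remove[OF fB b1(1)] by simp
    also have "(\<Sum>b\<in>B - {b1}. card b) = (\<Sum>b\<in>B - {b1}. 2)" using card2 by (intro sum.cong) auto
    finally have "S = 3 * n - 3" using cB b1(2) n3 by simp
    then show ?thesis using True np by simp
  next
    case False
    have "B \<noteq> {}"
    proof -
      have "2 \<le> card P" using n3 n_def by simp
      then obtain u v where "u \<in> P" "v \<in> P" "u \<noteq> v" using two by blast
      then show ?thesis using pbd_ex[OF pb] by blast
    qed
    define k where "k = Max (card ` B)"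
    have "k \<in> card ` B" unfolding k_def using fB \<open>B \<noteq> {}\<close> by (intro Max_in) auto
    then obtain b0 where b0: "b0 \<in> B" "card b0 = k" by (metis imageE)
    have kmax: "\<And>b. b \<in> B \<Longrightarrow> card b \<le> k" using Max_ge fB k_def by auto
    have k2: "k \<ge> 2" using c2 b0 by auto
    have "b0 \<subset> P" using sub[OF b0(1)] PB b0(1) by blast
    then have "k < n" using psubset_card_mono fP b0 n_def by blast
    moreover have "k \<noteq> n - 1" using False b0 by blast
    ultimately have kn: "k + 2 \<le> n" by linarith
    have "S \<ge> 3 * n - 2"
    proof (cases "k = 2")
      case True
      have rx: "n - 1 \<le> card {c\<in>B. x\<in>c}" if xP: "x \<in> P" for x
      proof -
        define h where "h y = (SOME c. c\<in>B \<and> x\<in>c \<and> y\<in>c)" for y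
        have h: "h y \<in> B \<and> x \<in> h y \<and> y \<in> h y" if "y \<in> P - {x}" for y
        proof -
          have "\<exists>c\<in>B. x\<in>c \<and> y\<in>c" using pbd_ex[OF pb xP] that by blast
          then show ?thesis unfolding h_def by (metis (mono_tags, lifting) someI_ex)
        qed
        have "inj_on h (P - {x})"
        proof (rule inj_onI)
          fix y y' assume yy: "y \<in> P - {x}" "y' \<in> P - {x}" "h y = h y'"
          show "y = y'"
          proof (rule ccontr)
            assume "y \<noteq> y'"
            have "{x, y, y'} \<subseteq> h y" using h[OF yy(1)] h[OF yy(2)] yy(3) by auto
            then have "card {x, y, y'} \<le> card (h y)" using fb h[OF yy(1)] by (intro card_mono) auto
            moreover have "card {x, y, y'} = 3" using yy \<open>y \<noteq> y'\<close> by auto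
            moreover have "card (h y) \<le> 2" using kmax h[OF yy(1)] True by auto
            ultimately show False by simp
          qed
        qed
        moreover have "h ` (P - {x}) \<subseteq> {c\<in>B. x\<in>c}" using h by blast
        moreover have "finite {c\<in>B. x\<in>c}" using fB by simp
        ultimately have "card (P - {x}) \<le> card {c\<in>B. x\<in>c}" by (metis card_inj_on_le)
        then show ?thesis using xP fP n_def by simp
      qed
      have "n * (n - 1) \<le> S" unfolding dc n_def
        using sum_bounded_below[of P "n - 1" "\<lambda>x. card {c\<in>B. x\<in>c}"] rx n_def by simp
      moreover have "4 * (n - 1) \<le> n * (n - 1)" using kn True by (intro mult_le_mono1) simp
      ultimately show ?thesis using kn by linarith
    next
      case False
      then have k3: "k \<ge> 3" using k2 by simp
      have "card (P - b0) = n - k" using card_Diff_subset[OF fb[OF b0(1)] sub[OF b0(1)]] b0 n_def by simp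
      then have "card (P - b0) \<ge> 2" using kn by simp
      then obtain q y where qy: "q \<in> P - b0" "y \<in> P - b0" "q \<noteq> y" using two by blast
      obtain c where c: "c \<in> B" "q \<in> c" "y \<in> c" using pbd_ex[OF pb, of q y] qy by auto
      have cne: "c \<noteq> b0" using c qy by blast
      have ci: "card (b0 \<inter> c) \<le> 1"
        using fb[OF b0(1)] pbd_uniq[OF pb b0(1) c(1)] cne
        by (subst One_nat_def, subst card_le_Suc0_iff_eq) auto
      have r_out: "k \<le> card {c\<in>B. x\<in>c}" if "x \<in> P - b0" for x
        using r_ge_card[OF pb b0(1)] that b0(2) by auto
      have r_in: "2 \<le> card {c\<in>B. x\<in>c}" if "x \<in> b0" for x
        using r_ge2[OF assms(1)] that sub[OF b0(1)] n3 n_def by auto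
      have r_in3: "3 \<le> card {c\<in>B. x\<in>c}" if xb: "x \<in> b0 - c" for x
      proof -
        have xP: "x \<in> P" using xb sub[OF b0(1)] by blast
        obtain d where d: "d \<in> B" "x \<in> d" "q \<in> d" using pbd_ex[OF pb xP, of q] qy xb by auto
        obtain e where e: "e \<in> B" "x \<in> e" "y \<in> e" using pbd_ex[OF pb xP, of y] qy xb by auto
        have "q \<notin> e"
        proof
          assume "q \<in> e"
          then have "e = c" using pbd_uniq[OF pb e(1) c(1), of q y] e c qy by blast
          then show False using e xb by blast
        qed
        have "{b0, d, e} \<subseteq> {c\<in>B. x\<in>c}" using b0 d e xb by blast
        then have "card {b0, d, e} \<le> card {c\<in>B. x\<in>c}" using fB by (intro card_mono) auto
        moreover have "b0 \<noteq> d" "b0 \<noteq> e" "d \<noteq> e" using d e qy \<open>q \<notin> e\<close> by auto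
        then have "card {b0, d, e} = 3" by simp
        ultimately show ?thesis by simp
      qed
      have fb0: "finite b0" using fb b0 by blast
      have split1: "S = (\<Sum>x\<in>P - b0. card {c\<in>B. x\<in>c}) + (\<Sum>x\<in>b0. card {c\<in>B. x\<in>c})"
        unfolding dc using sum.subset_diff[OF sub[OF b0(1)] fP] by simp
      have split2: "(\<Sum>x\<in>b0. card {c\<in>B. x\<in>c}) = (\<Sum>x\<in>b0 - c. card {c\<in>B. x\<in>c}) + (\<Sum>x\<in>b0 \<inter> c. card {c\<in>B. x\<in>c})"
        using sum.subset_diff[of "b0 \<inter> c" b0] fb0 by (simp add: Diff_Int)
      have s1: "(n - k) * k \<le> (\<Sum>x\<in>P - b0. card {c\<in>B. x\<in>c})"
        using sum_bounded_below[of "P - b0" k "\<lambda>x. card {c\<in>B. x\<in>c}"] r_out \<open>card (P - b0) = n - k\<close>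
        by simp
      have s2: "card (b0 - c) * 3 \<le> (\<Sum>x\<in>b0 - c. card {c\<in>B. x\<in>c})"
        using sum_bounded_below[of "b0 - c" 3 "\<lambda>x. card {c\<in>B. x\<in>c}"] r_in3 by simp
      have s3: "card (b0 \<inter> c) * 2 \<le> (\<Sum>x\<in>b0 \<inter> c. card {c\<in>B. x\<in>c})"
        using sum_bounded_below[of "b0 \<inter> c" 2 "\<lambda>x. card {c\<in>B. x\<in>c}"] r_in by simp
      have cs: "card (b0 - c) + card (b0 \<inter> c) = k"
        using card_Int_Diff[OF fb0, of c] b0(2) by simp
      have "(n - k) * 3 \<le> (n - k) * k" using k3 by simp
      then show ?thesis using split1 split2 s1 s2 s3 cs ci kn by linarith
    qed
    then show ?thesis using False by simp
  qed
  show ?thesis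
  proof (cases "\<exists>b\<in>B. card b = n - 1")
    case True
    then have "S = 3 * n - 3" "near_pencil P B" using main by (simp_all only: if_True)
    then show ?thesis unfolding S_def n_def by simp
  next
    case False
    then have "\<not> near_pencil P B" unfolding near_pencil_def n_def by blast
    moreover have "S \<ge> 3 * n - 2" using main False by (simp only: if_False)
    ultimately show ?thesis using n3 unfolding S_def n_def by linarith
  qed
qed

end
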